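(* For a set $\mathcal{R}$ of languages over $\Sigma$ and a regular language $R\subseteq\Sigma^*$ let $\mathcal{R}\,\dot\cap\,R=\{L\cap R\mid L\in\mathcal{R}\}$. (1) Rational sets of regular languages are not closed under point-wise intersection: there exist a rational set of regular languages $\mathcal{R}$ and a regular $R$ such that $\mathcal{R}\,\dot\cap\,R$ is not a rational set of regular languages. (2) If $\mathcal{R}$ is a finite rational set of regular languages and $R$ is regular, then $\mathcal{R}\,\dot\cap\,R$ is a finite rational set of regular languages. (3) In the latter case a different language substitution is in general required: there exist an alphabet $\Delta$, a regular language substitution $\varphi:\Delta\to2^{\Sigma^*}$, a regular $K\subseteq\Delta^+$ with $\mathcal{R}=(K,\varphi)$ finite, and a regular $R\subseteq\Sigma^*$ such that there is no regular $K'\subseteq\Delta^+$ with $\mathcal{R}\,\dot\cap\,R=(K',\varphi)$.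
   Context: Alphabets are nonempty finite sets. A regular language substitution $\varphi:\Delta\to2^{\Sigma^*}$ maps each symbol to a regular language over $\Sigma$, extended by $\varphi(\delta w)=\varphi(\delta)\varphi(w)$. A set $\mathcal{R}$ of regular languages over $\Sigma$ is a rational set of regular languages, written $\mathcal{R}=(K,\varphi)$, if there are an alphabet $\Delta$, a regular $K\subseteq\Delta^+$ and a regular language substitution $\varphi$ with $\mathcal{R}=\{\varphi(w)\mid w\in K\}$. *)

theory Defs
  imports Main
begin

definition alphabet :: "'a set \<Rightarrow> bool" where
  "alphabet A \<longleftrightarrow> finite A \<and> A \<noteq> {}"

definition conc :: "'a list set \<Rightarrow> 'a list set \<Rightarrow> 'a list set" where
  "conc A B = {u @ v | u v. u \<in> A \<and> v \<in> B}"

definition kstar :: "'a list set \<Rightarrow> 'a list set" where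
  "kstar A = {concat ws | ws. set ws \<subseteq> A}"

inductive regular :: "'a set \<Rightarrow> 'a list set \<Rightarrow> bool" for Sig where
  reg_empty: "regular Sig {}"
| reg_eps: "regular Sig {[]}"
| reg_sym: "a \<in> Sig \<Longrightarrow> regular Sig {[a]}"
| reg_union: "regular Sig A \<Longrightarrow> regular Sig B \<Longrightarrow> regular Sig (A \<union> B)"
| reg_conc: "regular Sig A \<Longrightarrow> regular Sig B \<Longrightarrow> regular Sig (conc A B)"
| reg_star: "regular Sig A \<Longrightarrow> regular Sig (kstar A)"

definition subst_word :: "('d \<Rightarrow> 'a list set) \<Rightarrow> 'd list \<Rightarrow> 'a list set" where
  "subst_word phi w = foldr (\<lambda>d L. conc (phi d) L) w {[]}"

definition rational_by ::
  "'a set \<Rightarrow> 'd set \<Rightarrow> 'd list set \<Rightarrow> ('d \<Rightarrow> 'a list set) \<Rightarrow> 'a list set set \<Rightarrow> bool" where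
  "rational_by Sig Delta K phi RR \<longleftrightarrow>
     alphabet Delta \<and> regular Delta K \<and> [] \<notin> K \<and>
     (\<forall>d\<in>Delta. regular Sig (phi d)) \<and>
     RR = subst_word phi ` K"

text \<open>Rational sets of regular languages over \<open>Sig\<close>. Since any finite alphabet can be
  encoded by natural numbers, the auxiliary alphabet Delta is taken to be a set of naturals.\<close>
definition rational_set :: "'a set \<Rightarrow> 'a list set set \<Rightarrow> bool" where
  "rational_set Sig RR \<longleftrightarrow> (\<exists>(Delta::nat set) K phi. rational_by Sig Delta K phi RR)"

definition pint :: "'a list set set \<Rightarrow> 'a list set \<Rightarrow> 'a list set set" where
  "pint RR R = (\<lambda>L. L \<inter> R) ` RR"

end

theory Submission
  imports Defs
begin


lemma regular_lists: "regular Sig A \<Longrightarrow> A \<subseteq> lists Sig"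
proof (induction rule: regular.induct)
  case (reg_conc A B)
  { fix u v assume "u \<in> A" "v \<in> B"
    then have "u \<in> lists Sig" "v \<in> lists Sig" using reg_conc.IH by blast+
    then have "u @ v \<in> lists Sig" by simp }
  then show ?case unfolding conc_def by blast
next
  case (reg_star A)
  { fix ws :: "'a list list" assume "set ws \<subseteq> A"
    then have "concat ws \<in> lists Sig" using reg_star.IH by (induction ws) auto }
  then show ?case unfolding kstar_def by blast
qed auto

lemma subst_word_simps[simp]:
  "subst_word phi [] = {[]}" "subst_word phi (d#w) = conc (phi d) (subst_word phi w)"
  by (simp_all add: subst_word_def)

lemma conc_eps[simp]: "conc X {[]} = X" "conc {[]} X = X"
  by (auto simp: conc_def)

lemma regular_single: "w \<in> lists Sig \<Longrightarrow> regular Sig {w}"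
proof (induction w)
  case Nil show ?case by (rule reg_eps)
next
  case (Cons a w)
  have e: "{a#w} = conc {[a]} {w}" by (auto simp: conc_def)
  have "regular Sig {[a]}" using Cons.prems by (intro reg_sym) simp
  moreover have "regular Sig {w}" using Cons by simp
  ultimately show ?case unfolding e by (rule reg_conc)
qed

lemma regular_finite: "finite S \<Longrightarrow> S \<subseteq> lists Sig \<Longrightarrow> regular Sig S"
proof (induction rule: finite_induct)
  case empty show ?case by (rule reg_empty)
next
  case (insert x F)
  have e: "insert x F = {x} \<union> F" by auto
  have "regular Sig {x}" using insert.prems by (intro regular_single) simp
  moreover have "regular Sig F" using insert by simp
  ultimately show ?case unfolding e by (rule reg_union)
qed

lemma regular_Union: "finite F \<Longrightarrow> \<forall>X\<in>F. regular Sig X \<Longrightarrow> regular Sig (\<Union>F)"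
proof (induction rule: finite_induct)
  case (insert x F)
  then have "regular Sig (x \<union> \<Union>F)" by (intro reg_union) auto
  then show ?case by simp
qed (simp add: reg_empty)

lemma regular_subst_word: "\<forall>d\<in>set w. regular Sig (phi d) \<Longrightarrow> regular Sig (subst_word phi w)"
  by (induction w) (simp_all add: reg_eps reg_conc)

definition lq :: "'a list set \<Rightarrow> 'a list \<Rightarrow> 'a list set" where
  "lq L u = {v. u @ v \<in> L}"

lemma nil_kstar[simp]: "[] \<in> kstar A"
  unfolding kstar_def by (intro CollectI exI[of _ "[]"]) simp

lemma concat_kstar: "set ws \<subseteq> A \<Longrightarrow> concat ws \<in> kstar A"
  unfolding kstar_def by blast

lemma lq_conc: "lq (conc A B) u = conc (lq A u) B \<union> \<Union> (lq B ` {v. \<exists>w. u = w @ v \<and> w \<in> A})"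
proof (rule set_eqI, rule iffI)
  fix v assume "v \<in> lq (conc A B) u"
  then obtain x y where xy: "u @ v = x @ y" "x \<in> A" "y \<in> B" by (auto simp: lq_def conc_def)
  then obtain us where "(u = x @ us \<and> us @ v = y) \<or> (x = u @ us \<and> v = us @ y)"
    by (auto simp: append_eq_append_conv2)
  then show "v \<in> conc (lq A u) B \<union> \<Union> (lq B ` {v. \<exists>w. u = w @ v \<and> w \<in> A})"
  proof
    assume h: "u = x @ us \<and> us @ v = y"
    then have "v \<in> lq B us" using xy by (simp add: lq_def)
    moreover have "us \<in> {v. \<exists>w. u = w @ v \<and> w \<in> A}" using h xy by blast
    ultimately show ?thesis by blast
  next
    assume h: "x = u @ us \<and> v = us @ y"
    then have "us \<in> lq A u" using xy by (simp add: lq_def)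
    then have "v \<in> conc (lq A u) B" using h xy unfolding conc_def by blast
    then show ?thesis by blast
  qed
next
  fix v assume "v \<in> conc (lq A u) B \<union> \<Union> (lq B ` {v. \<exists>w. u = w @ v \<and> w \<in> A})"
  then show "v \<in> lq (conc A B) u"
  proof
    assume "v \<in> conc (lq A u) B"
    then obtain s y where "v = s @ y" "u @ s \<in> A" "y \<in> B" by (auto simp: conc_def lq_def)
    then have "u @ v = (u @ s) @ y" by simp
    with \<open>u @ s \<in> A\<close> \<open>y \<in> B\<close> show ?thesis unfolding lq_def conc_def by blast
  next
    assume "v \<in> \<Union> (lq B ` {v. \<exists>w. u = w @ v \<and> w \<in> A})"
    then obtain w us where "u = w @ us" "w \<in> A" "us @ v \<in> B" by (auto simp: lq_def)
    then have "u @ v = w @ (us @ v)" by simp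
    with \<open>w \<in> A\<close> \<open>us @ v \<in> B\<close> show ?thesis unfolding lq_def conc_def by blast
  qed
qed

lemma kstar_split:
  assumes "u \<noteq> []" "u @ v' = concat ws" "set ws \<subseteq> A"
  shows "\<exists>w v s ws2. u = w @ v \<and> v \<noteq> [] \<and> w \<in> kstar A \<and> v @ s \<in> A \<and> v' = s @ concat ws2 \<and> set ws2 \<subseteq> A"
  using assms
proof (induction ws arbitrary: u)
  case Nil then show ?case by simp
next
  case (Cons x ws)
  from Cons.prems(2) have "u @ v' = x @ concat ws" by simp
  then obtain us where us: "(u = x @ us \<and> us @ v' = concat ws) \<or> (x = u @ us \<and> v' = us @ concat ws)"
    unfolding append_eq_append_conv2 by blast
  have xA: "x \<in> A" "set ws \<subseteq> A" using Cons.prems(3) by auto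
  show ?case
  proof (cases "x = u @ us \<and> v' = us @ concat ws")
    case True
    then show ?thesis using Cons.prems(1) xA
      by (intro exI[of _ "[]"] exI[of _ u] exI[of _ us] exI[of _ ws]) simp
  next
    case False
    with us have u: "u = x @ us" and v: "us @ v' = concat ws" by auto
    show ?thesis
    proof (cases "us = []")
      case True
      then show ?thesis using Cons.prems(1) u v xA
        by (intro exI[of _ "[]"] exI[of _ x] exI[of _ "[]"] exI[of _ ws]) simp
    next
      case False
      from Cons.IH[OF False v xA(2)] obtain w v s ws2 where
        h: "us = w @ v" "v \<noteq> []" "w \<in> kstar A" "v @ s \<in> A" "v' = s @ concat ws2" "set ws2 \<subseteq> A" by blast
      from h(3) obtain ws1 where "w = concat ws1" "set ws1 \<subseteq> A" by (auto simp: kstar_def)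
      then have "x @ w = concat (x # ws1)" "set (x # ws1) \<subseteq> A" using xA by auto
      then have "x @ w \<in> kstar A" by (metis concat_kstar)
      with h u show ?thesis by (intro exI[of _ "x @ w"] exI[of _ v] exI[of _ s] exI[of _ ws2]) simp
    qed
  qed
qed

lemma lq_kstar: "u \<noteq> [] \<Longrightarrow> lq (kstar A) u = \<Union> ((\<lambda>X. conc X (kstar A)) ` (lq A ` {v. \<exists>w. u = w @ v \<and> v \<noteq> [] \<and> w \<in> kstar A}))"
proof (rule set_eqI, rule iffI)
  fix v' assume u: "u \<noteq> []" and "v' \<in> lq (kstar A) u"
  then obtain ws where "u @ v' = concat ws" "set ws \<subseteq> A" by (auto simp: lq_def kstar_def)
  from kstar_split[OF u this] obtain w v s ws2 where
    h: "u = w @ v" "v \<noteq> []" "w \<in> kstar A" "v @ s \<in> A" "v' = s @ concat ws2" "set ws2 \<subseteq> A" by blast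
  then show "v' \<in> \<Union> ((\<lambda>X. conc X (kstar A)) ` (lq A ` {v. \<exists>w. u = w @ v \<and> v \<noteq> [] \<and> w \<in> kstar A}))"
  proof -
    have "v \<in> {v. \<exists>w. u = w @ v \<and> v \<noteq> [] \<and> w \<in> kstar A}" using h by blast
    moreover have "v' \<in> conc (lq A v) (kstar A)" unfolding conc_def lq_def
      using h concat_kstar[OF h(6)] by blast
    ultimately show ?thesis by blast
  qed
next
  fix v' assume "v' \<in> \<Union> ((\<lambda>X. conc X (kstar A)) ` (lq A ` {v. \<exists>w. u = w @ v \<and> v \<noteq> [] \<and> w \<in> kstar A}))"
  then obtain w v s t where h: "u = w @ v" "w \<in> kstar A" "v @ s \<in> A" "t \<in> kstar A" "v' = s @ t"
    by (auto simp: lq_def conc_def)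
  from h(2) obtain ws1 where 1: "w = concat ws1" "set ws1 \<subseteq> A" by (auto simp: kstar_def)
  from h(4) obtain ws2 where 2: "t = concat ws2" "set ws2 \<subseteq> A" by (auto simp: kstar_def)
  have "u @ v' = concat (ws1 @ [v @ s] @ ws2)" using h 1 2 by simp
  moreover have "set (ws1 @ [v @ s] @ ws2) \<subseteq> A" using h 1 2 by auto
  ultimately show "v' \<in> lq (kstar A) u" unfolding lq_def by (metis concat_kstar mem_Collect_eq)
qed

lemma lq_nil[simp]: "lq L [] = L" by (simp add: lq_def)

lemma finite_lq: "regular Sig L \<Longrightarrow> finite (range (lq L))"
proof (induction rule: regular.induct)
  case reg_empty
  have "range (lq ({}::'a list set)) \<subseteq> {{}}" by (auto simp: lq_def)
  then show ?case by (rule finite_subset) auto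
next
  case reg_eps
  have "range (lq ({[]}::'a list set)) \<subseteq> {{[]}, {}}" by (auto simp: lq_def)
  then show ?case by (rule finite_subset) auto
next
  case (reg_sym a)
  have e: "lq {[a]} u \<in> {{[a]}, {[]}, {}}" for u
    by (cases u) (auto simp: lq_def)
  have "range (lq {[a]}) \<subseteq> {{[a]}, {[]}, {}}"
    using e by auto
  then show ?case by (rule finite_subset) auto
next
  case (reg_union A B)
  have "lq (A \<union> B) u = lq A u \<union> lq B u" for u by (auto simp: lq_def)
  then have "range (lq (A \<union> B)) \<subseteq> (\<lambda>(X,Y). X \<union> Y) ` (range (lq A) \<times> range (lq B))"
    by (auto intro!: image_eqI)
  then show ?case by (rule finite_subset) (use reg_union in auto)
next
  case (reg_conc A B)
  have "range (lq (conc A B)) \<subseteq> (\<lambda>(X,S). conc X B \<union> \<Union>S) ` (range (lq A) \<times> Pow (range (lq B)))"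
  proof
    fix M assume "M \<in> range (lq (conc A B))"
    then obtain u where "M = lq (conc A B) u" by auto
    then show "M \<in> (\<lambda>(X,S). conc X B \<union> \<Union>S) ` (range (lq A) \<times> Pow (range (lq B)))"
      unfolding lq_conc
      by (intro image_eqI[of _ _ "(lq A u, lq B ` {v. \<exists>w. u = w @ v \<and> w \<in> A})"]) auto
  qed
  then show ?case by (rule finite_subset) (use reg_conc in auto)
next
  case (reg_star A)
  have "range (lq (kstar A)) \<subseteq> insert (kstar A) ((\<lambda>S. \<Union> ((\<lambda>X. conc X (kstar A)) ` S)) ` Pow (range (lq A)))"
  proof
    fix M assume "M \<in> range (lq (kstar A))"
    then obtain u where M: "M = lq (kstar A) u" by auto
    show "M \<in> insert (kstar A) ((\<lambda>S. \<Union> ((\<lambda>X. conc X (kstar A)) ` S)) ` Pow (range (lq A)))"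
    proof (cases "u = []")
      case True then show ?thesis using M by simp
    next
      case False
      then show ?thesis unfolding M lq_kstar[OF False]
        by (intro insertI2 image_eqI[of _ _ "lq A ` {v. \<exists>w. u = w @ v \<and> v \<noteq> [] \<and> w \<in> kstar A}"]) auto
    qed
  qed
  then show ?case by (rule finite_subset) (use reg_star in auto)
qed




fun run :: "('s \<Rightarrow> 'a \<Rightarrow> 's) \<Rightarrow> 's \<Rightarrow> 'a list \<Rightarrow> 's" where
  "run d p [] = p" | "run d p (a#w) = run d (d p a) w"

lemma run_append[simp]: "run d p (x @ y) = run d (run d p x) y"
  by (induction x arbitrary: p) auto

definition paths :: "'a set \<Rightarrow> ('s \<Rightarrow> 'a \<Rightarrow> 's) \<Rightarrow> 's set \<Rightarrow> 's \<Rightarrow> 's \<Rightarrow> 'a list set" where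
  "paths Sig d T p q = {w. w \<in> lists Sig \<and> run d p w = q \<and>
     (\<forall>i. 0 < i \<and> i < length w \<longrightarrow> run d p (take i w) \<in> T)}"

lemma paths_mono: "T \<subseteq> T' \<Longrightarrow> paths Sig d T p q \<subseteq> paths Sig d T' p q"
  unfolding paths_def by blast

lemma paths_nil: "[] \<in> paths Sig d T t t"
  unfolding paths_def by simp

lemma paths_append:
  assumes x: "x \<in> paths Sig d T p r" and y: "y \<in> paths Sig d T r q" and r: "r \<in> T"
  shows "x @ y \<in> paths Sig d T p q"
  unfolding paths_def
proof (intro CollectI conjI allI impI)
  show "x @ y \<in> lists Sig" using x y by (simp add: paths_def)
  show "run d p (x @ y) = q" using x y by (simp add: paths_def)
  fix i assume i: "0 < i \<and> i < length (x @ y)"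
  consider "i < length x" | "i = length x" | "i > length x" by linarith
  then show "run d p (take i (x @ y)) \<in> T"
  proof cases
    case 1 then show ?thesis using x i by (simp add: paths_def)
  next
    case 2 then show ?thesis using x r by (simp add: paths_def)
  next
    case 3
    then have "take i (x @ y) = x @ take (i - length x) y" by simp
    moreover have "run d p x = r" using x by (simp add: paths_def)
    moreover have "run d r (take (i - length x) y) \<in> T" using y i 3 unfolding paths_def by auto
    ultimately show ?thesis by simp
  qed
qed

lemma paths_concat:
  assumes "set ys \<subseteq> paths Sig d T t t" "t \<in> T"
  shows "concat ys \<in> paths Sig d T t t"
  using assms by (induction ys) (auto intro: paths_nil paths_append)

lemma paths_first:
  assumes w: "w \<in> paths Sig d (insert t T) p q"
  shows "w \<in> paths Sig d T p q \<or> (\<exists>x y. w = x @ y \<and> x \<noteq> [] \<and> x \<in> paths Sig d T p t \<and> y \<in> paths Sig d (insert t T) t q)"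
proof (cases "\<exists>i. 0 < i \<and> i < length w \<and> run d p (take i w) = t")
  case False
  then show ?thesis using w unfolding paths_def by blast
next
  case True
  define i where "i = (LEAST i. 0 < i \<and> i < length w \<and> run d p (take i w) = t)"
  have i: "0 < i \<and> i < length w \<and> run d p (take i w) = t"
    unfolding i_def using True by (rule LeastI_ex)
  have min: "\<And>j. 0 < j \<Longrightarrow> j < i \<Longrightarrow> run d p (take j w) \<noteq> t"
  proof -
    fix j assume j: "0 < j" "j < i"
    show "run d p (take j w) \<noteq> t"
    proof
      assume "run d p (take j w) = t"
      with j i have "0 < j \<and> j < length w \<and> run d p (take j w) = t" by simp
      then have "i \<le> j" unfolding i_def by (rule Least_le)
      with j show False by simp
    qed
  qed
  have wl: "w \<in> lists Sig" and wr: "run d p w = q"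
    and wm: "\<And>j. 0 < j \<Longrightarrow> j < length w \<Longrightarrow> run d p (take j w) \<in> insert t T"
    using w unfolding paths_def by auto
  have "take i w \<in> paths Sig d T p t"
    unfolding paths_def
  proof (intro CollectI conjI allI impI)
    show "take i w \<in> lists Sig" using wl by (meson in_lists_conv_set in_set_takeD)
    show "run d p (take i w) = t" using i by simp
    fix j assume j: "0 < j \<and> j < length (take i w)"
    then have "j < i" "j < length w" by auto
    then have "take j (take i w) = take j w" by (simp add: min_def)
    then show "run d p (take j (take i w)) \<in> T" using wm[of j] min[of j] j \<open>j < i\<close> \<open>j < length w\<close> by auto
  qed
  moreover have "drop i w \<in> paths Sig d (insert t T) t q"
    unfolding paths_def
  proof (intro CollectI conjI allI impI)
    show "drop i w \<in> lists Sig" using wl by (meson in_lists_conv_set in_set_dropD)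
    have "run d p w = run d (run d p (take i w)) (drop i w)"
      by (metis append_take_drop_id run_append)
    then show "run d t (drop i w) = q" using i wr by simp
    fix j assume j: "0 < j \<and> j < length (drop i w)"
    have "take (i + j) w = take i w @ take j (drop i w)" by (simp add: take_add)
    then have "run d p (take (i + j) w) = run d t (take j (drop i w))" using i by simp
    moreover have "run d p (take (i + j) w) \<in> insert t T" using wm[of "i+j"] j i by auto
    ultimately show "run d t (take j (drop i w)) \<in> insert t T" by simp
  qed
  moreover have "take i w \<noteq> []" using i by (auto simp: take_eq_Nil)
  ultimately show ?thesis by (intro disjI2 exI[of _ "take i w"] exI[of _ "drop i w"]) simp
qed

lemma paths_loop:
  "w \<in> paths Sig d (insert t T) t q \<Longrightarrow> w \<in> conc (kstar (paths Sig d T t t)) (paths Sig d T t q)"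
proof (induction "length w" arbitrary: w rule: less_induct)
  case less
  from paths_first[OF less.prems] show ?case
  proof
    assume "w \<in> paths Sig d T t q"
    then show ?thesis unfolding conc_def by (intro CollectI exI[of _ "[]"] exI[of _ w]) simp
  next
    assume "\<exists>x y. w = x @ y \<and> x \<noteq> [] \<and> x \<in> paths Sig d T t t \<and> y \<in> paths Sig d (insert t T) t q"
    then obtain x y where h: "w = x @ y" "x \<noteq> []" "x \<in> paths Sig d T t t" "y \<in> paths Sig d (insert t T) t q" by blast
    then have "length y < length w" by simp
    from less.hyps[OF this h(4)] obtain a b where ab: "y = a @ b" "a \<in> kstar (paths Sig d T t t)" "b \<in> paths Sig d T t q"
      by (auto simp: conc_def)
    from ab(2) obtain ws where ws: "a = concat ws" "set ws \<subseteq> paths Sig d T t t" by (auto simp: kstar_def)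
    have "x @ a = concat (x # ws)" "set (x # ws) \<subseteq> paths Sig d T t t" using ws h by auto
    then have "x @ a \<in> kstar (paths Sig d T t t)" by (metis concat_kstar)
    moreover have "w = (x @ a) @ b" using h ab by simp
    ultimately show ?thesis using ab(3) unfolding conc_def by blast
  qed
qed

lemma paths_insert:
  "paths Sig d (insert t T) p q = paths Sig d T p q \<union>
     conc (paths Sig d T p t) (conc (kstar (paths Sig d T t t)) (paths Sig d T t q))"
proof (rule set_eqI, rule iffI)
  fix w assume w: "w \<in> paths Sig d (insert t T) p q"
  from paths_first[OF w] show "w \<in> paths Sig d T p q \<union>
     conc (paths Sig d T p t) (conc (kstar (paths Sig d T t t)) (paths Sig d T t q))"
  proof
    assume "\<exists>x y. w = x @ y \<and> x \<noteq> [] \<and> x \<in> paths Sig d T p t \<and> y \<in> paths Sig d (insert t T) t q"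
    then obtain x y where h: "w = x @ y" "x \<in> paths Sig d T p t" "y \<in> paths Sig d (insert t T) t q" by blast
    from paths_loop[OF h(3)] h show ?thesis unfolding conc_def by blast
  qed simp
next
  fix w assume "w \<in> paths Sig d T p q \<union>
     conc (paths Sig d T p t) (conc (kstar (paths Sig d T t t)) (paths Sig d T t q))"
  then show "w \<in> paths Sig d (insert t T) p q"
  proof
    assume "w \<in> paths Sig d T p q"
    then show ?thesis using paths_mono[of T "insert t T"] by blast
  next
    assume "w \<in> conc (paths Sig d T p t) (conc (kstar (paths Sig d T t t)) (paths Sig d T t q))"
    then obtain x ws z where h: "w = x @ concat ws @ z" "x \<in> paths Sig d T p t"
      "set ws \<subseteq> paths Sig d T t t" "z \<in> paths Sig d T t q"
      by (auto simp: conc_def kstar_def)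
    have sub: "paths Sig d T a b \<subseteq> paths Sig d (insert t T) a b" for a b
      by (rule paths_mono) blast
    have "concat ws \<in> paths Sig d (insert t T) t t"
      using h(3) sub by (intro paths_concat) blast+
    then have "concat ws @ z \<in> paths Sig d (insert t T) t q"
      using h(4) sub by (intro paths_append) blast+
    moreover have "x \<in> paths Sig d (insert t T) p t" using h(2) sub by blast
    ultimately show ?thesis unfolding h(1) by (intro paths_append[of x _ _ _ _ t]) auto
  qed
qed

lemma paths_empty_finite:
  assumes "finite Sig"
  shows "regular Sig (paths Sig d {} p q)"
proof (rule regular_finite)
  have "paths Sig d {} p q \<subseteq> {xs. set xs \<subseteq> Sig \<and> length xs \<le> 1}"
  proof
    fix w assume w: "w \<in> paths Sig d {} p q"
    have "length w \<le> 1"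
    proof (rule ccontr)
      assume "\<not> length w \<le> 1"
      then have "0 < (1::nat) \<and> 1 < length w" by simp
      then show False using w unfolding paths_def by blast
    qed
    then show "w \<in> {xs. set xs \<subseteq> Sig \<and> length xs \<le> 1}" using w by (auto simp: paths_def)
  qed
  then show "finite (paths Sig d {} p q)"
    using finite_lists_length_le[OF assms, of 1] by (rule finite_subset)
  show "paths Sig d {} p q \<subseteq> lists Sig" by (auto simp: paths_def)
qed

lemma paths_regular:
  assumes "finite Sig" "finite T"
  shows "regular Sig (paths Sig d T p q)"
  using assms(2)
proof (induction arbitrary: p q rule: finite_induct)
  case empty show ?case by (rule paths_empty_finite[OF assms(1)])
next
  case (insert t T)
  show ?case unfolding paths_insert
    by (intro reg_union reg_conc reg_star insert.IH)
qed




lemma run_lq: "run (\<lambda>X a. lq X [a]) X w = lq X w"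
  by (induction w arbitrary: X) (auto simp: lq_def)

lemma finite_lq_regular:
  assumes Sig: "finite Sig" and L: "L \<subseteq> lists Sig" and fin: "finite (range (lq L))"
  shows "regular Sig L"
proof -
  define d where "d = (\<lambda>X (a::'a). lq X [a])"
  define S where "S = range (lq L)"
  have "L = \<Union> ((\<lambda>q. paths Sig d S L q) ` {q \<in> S. [] \<in> q})"
  proof (rule set_eqI, rule iffI)
    fix w assume w: "w \<in> L"
    have "w \<in> paths Sig d S L (lq L w)"
      unfolding paths_def d_def run_lq S_def using w L by auto
    moreover have "lq L w \<in> {q \<in> S. [] \<in> q}" using w by (auto simp: S_def lq_def)
    ultimately show "w \<in> \<Union> ((\<lambda>q. paths Sig d S L q) ` {q \<in> S. [] \<in> q})" by blast
  next
    fix w assume "w \<in> \<Union> ((\<lambda>q. paths Sig d S L q) ` {q \<in> S. [] \<in> q})"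
    then obtain q where "[] \<in> q" "w \<in> paths Sig d S L q" by blast
    then have "[] \<in> lq L w" unfolding paths_def d_def run_lq by auto
    then show "w \<in> L" by (simp add: lq_def)
  qed
  moreover have "regular Sig (\<Union> ((\<lambda>q. paths Sig d S L q) ` {q \<in> S. [] \<in> q}))"
    using fin unfolding S_def
    by (intro regular_Union) (auto intro: paths_regular[OF Sig])
  ultimately show ?thesis by simp
qed

lemma regular_Int:
  assumes "finite Sig" "regular Sig A" "regular Sig B"
  shows "regular Sig (A \<inter> B)"
proof (rule finite_lq_regular[OF assms(1)])
  show "A \<inter> B \<subseteq> lists Sig" using regular_lists[OF assms(2)] by blast
  have e: "lq (A \<inter> B) u = lq A u \<inter> lq B u" for u by (auto simp: lq_def)
  have "range (lq (A \<inter> B)) \<subseteq> (\<lambda>(X,Y). X \<inter> Y) ` (range (lq A) \<times> range (lq B))"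
    unfolding e by auto
  moreover have "finite ((\<lambda>(X,Y). X \<inter> Y) ` (range (lq A) \<times> range (lq B)))"
    using finite_lq[OF assms(2)] finite_lq[OF assms(3)] by simp
  ultimately show "finite (range (lq (A \<inter> B)))" by (rule finite_subset)
qed




lemma finite_regular_rational:
  assumes fin: "finite F" and reg: "\<forall>M\<in>F. regular Sig M"
  shows "rational_set Sig F"
proof (cases "F = {}")
  case True
  have "rational_by Sig {0::nat} {} (\<lambda>_. {}) F"
    unfolding rational_by_def alphabet_def using True by (auto intro: reg_empty)
  then show ?thesis unfolding rational_set_def by blast
next
  case False
  from finite_imp_nat_seg_image_inj_on[OF fin] obtain n and f :: "nat \<Rightarrow> 'a list set"
    where nf: "F = f ` {i. i < n}" by blast
  with False have n: "n > 0" by (cases n) auto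
  define K where "K = (\<lambda>i. [i]) ` {i. i < n}"
  have "rational_by Sig {i. i < n} K f F"
    unfolding rational_by_def
  proof (intro conjI)
    show "alphabet {i. i < n}" using n unfolding alphabet_def by auto
    show "regular {i. i < n} K" unfolding K_def by (rule regular_finite) auto
    show "[] \<notin> K" unfolding K_def by auto
    show "\<forall>d\<in>{i. i < n}. regular Sig (f d)" using reg nf by auto
    show "F = subst_word f ` K" unfolding K_def nf by (auto simp: image_image)
  qed
  then show ?thesis unfolding rational_set_def by blast
qed

lemma part2:
  assumes Sig: "alphabet Sig" and rat: "rational_set Sig RR" and fin: "finite RR"
    and R: "regular Sig R"
  shows "rational_set Sig (pint RR R) \<and> finite (pint RR R)"
proof
  show f: "finite (pint RR R)" unfolding pint_def using fin by simp
  from rat obtain Delta :: "nat set" and K phi where rb: "rational_by Sig Delta K phi RR"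
    unfolding rational_set_def by blast
  have "\<forall>M\<in>pint RR R. regular Sig M"
  proof
    fix M assume "M \<in> pint RR R"
    then obtain w where w: "w \<in> K" "M = subst_word phi w \<inter> R"
      using rb unfolding pint_def rational_by_def by auto
    have "set w \<subseteq> Delta" using w(1) regular_lists[of Delta K] rb
      unfolding rational_by_def by (auto simp: in_lists_conv_set)
    then have "regular Sig (subst_word phi w)" using rb
      unfolding rational_by_def by (intro regular_subst_word) auto
    then show "regular Sig M" unfolding w(2)
      using regular_Int[OF _ _ R] Sig unfolding alphabet_def by blast
  qed
  with f show "rational_set Sig (pint RR R)" by (rule finite_regular_rational)
qed

lemma subst_nonempty: "replicate (length w) (0::nat) \<in> subst_word (\<lambda>_. {[0]}) w"
  by (induction w) (auto simp: conc_def)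

lemma part3:
  "\<exists>(Sig::nat set) (Delta::nat set) phi K R.
            alphabet Sig \<and> rational_by Sig Delta K phi (subst_word phi ` K) \<and>
            finite (subst_word phi ` K) \<and> regular Sig R \<and>
            \<not> (\<exists>K'. rational_by Sig Delta K' phi (pint (subst_word phi ` K) R))"
proof (intro exI conjI)
  let ?phi = "\<lambda>_::nat. {[0::nat]}"
  show "alphabet {0::nat}" by (simp add: alphabet_def)
  show "rational_by {0::nat} {0::nat} {[0]} ?phi (subst_word ?phi ` {[0]})"
    unfolding rational_by_def alphabet_def by (auto intro: reg_sym)
  show "finite (subst_word ?phi ` {[0]})" by simp
  show "regular {0::nat} {}" by (rule reg_empty)
  show "\<not> (\<exists>K'. rational_by {0::nat} {0::nat} K' ?phi (pint (subst_word ?phi ` {[0]}) {}))"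
  proof
    assume "\<exists>K'. rational_by {0::nat} {0::nat} K' ?phi (pint (subst_word ?phi ` {[0]}) {})"
    then obtain K' where "pint (subst_word ?phi ` {[0]}) {} = subst_word ?phi ` K'"
      unfolding rational_by_def by blast
    moreover have "pint (subst_word ?phi ` {[0]}) {} = {{}}" by (simp add: pint_def)
    ultimately have "{} \<in> subst_word ?phi ` K'" by simp
    then obtain w where "subst_word ?phi w = {}" by auto
    with subst_nonempty[of w] show False by simp
  qed
qed




definition AA :: "nat \<Rightarrow> nat list set" where
  "AA n = {replicate n 0, replicate n 1}"

lemma rep_set: "u @ v = replicate n (c::nat) \<Longrightarrow> set u \<subseteq> {c} \<and> set v \<subseteq> {c}"
  by (metis Un_upper1 Un_upper2 set_append set_replicate_Suc set_replicate_conv_if empty_subsetI order_trans subset_insertI)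

lemma prime_helper:
  assumes XY: "conc X Y = {replicate n c, replicate n c'}" and cc: "c \<noteq> (c'::nat)"
    and x: "x \<in> X" "x \<noteq> []" and y: "y \<in> Y" "y \<noteq> []" and xy: "x @ y = replicate n c"
  shows False
proof -
  have "replicate n c' \<in> conc X Y" using XY by simp
  then obtain x2 y2 where h: "x2 \<in> X" "y2 \<in> Y" "x2 @ y2 = replicate n c'" by (auto simp: conc_def)
  have "x @ y2 \<in> conc X Y" using x h unfolding conc_def by blast
  then have m: "x @ y2 = replicate n c \<or> x @ y2 = replicate n c'" using XY by simp
  then have "length (x @ y2) = n" by (metis length_replicate)
  moreover have "length (x @ y) = n" using xy by simp
  ultimately have "length y2 = length y" by simp
  then have "y2 \<noteq> []" using y by auto
  have sx: "set x \<subseteq> {c}" using rep_set[OF xy] by blast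
  have sy2: "set y2 \<subseteq> {c'}" using rep_set[OF h(3)] by blast
  from m show False
  proof
    assume "x @ y2 = replicate n c"
    then have "set y2 \<subseteq> {c}" using rep_set by blast
    with sy2 \<open>y2 \<noteq> []\<close> cc show False by (cases y2) auto
  next
    assume "x @ y2 = replicate n c'"
    then have "set x \<subseteq> {c'}" using rep_set by blast
    with sx x(2) cc show False by (cases x) auto
  qed
qed

lemma AA_prime:
  assumes "conc X Y = AA n" "n > 0"
  shows "X = {[]} \<or> Y = {[]}"
proof (rule ccontr)
  assume nt: "\<not> (X = {[]} \<or> Y = {[]})"
  have "replicate n 0 \<in> conc X Y" using assms by (simp add: AA_def)
  then have "X \<noteq> {}" "Y \<noteq> {}" by (auto simp: conc_def)
  with nt obtain x y where x: "x \<in> X" "x \<noteq> []" and y: "y \<in> Y" "y \<noteq> []" by blast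
  have "x @ y \<in> conc X Y" using x y unfolding conc_def by blast
  then have "x @ y = replicate n 0 \<or> x @ y = replicate n 1" using assms by (simp add: AA_def)
  then show False
  proof
    assume "x @ y = replicate n 0"
    then show False using prime_helper[of X Y n 0 1] assms x y by (simp add: AA_def)
  next
    assume "x @ y = replicate n 1"
    then show False using prime_helper[of X Y n 1 0] assms x y by (simp add: AA_def insert_commute)
  qed
qed

lemma AA_factor: "subst_word phi w = AA n \<Longrightarrow> n > 0 \<Longrightarrow> AA n \<in> phi ` set w"
proof (induction w)
  case Nil then show ?case by (simp add: AA_def)
next
  case (Cons d w)
  then have "conc (phi d) (subst_word phi w) = AA n" by simp
  from AA_prime[OF this Cons.prems(2)] show ?case
  proof
    assume "phi d = {[]}"
    then have "subst_word phi w = AA n" using Cons.prems by simp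
    then show ?case using Cons by auto
  next
    assume "subst_word phi w = {[]}"
    then have "phi d = AA n" using Cons.prems by simp
    then show ?case by simp
  qed
qed

lemma AA_inj: "inj (\<lambda>n. AA (Suc n))"
proof (rule injI)
  fix n m assume "AA (Suc n) = AA (Suc m)"
  then have "replicate (Suc n) (0::nat) \<in> AA (Suc m)" by (metis AA_def insertI1)
  then have "length (replicate (Suc n) (0::nat)) = Suc m" unfolding AA_def
    by (metis insert_iff length_replicate singletonD)
  then show "n = m" by simp
qed

lemma kstar_single: "kstar {[c]} = range (\<lambda>m. replicate m c)"
proof (rule set_eqI, rule iffI)
  fix w assume "w \<in> kstar {[c]}"
  then obtain ws where "w = concat ws" "set ws \<subseteq> {[c]}" by (auto simp: kstar_def)
  then have "ws = replicate (length ws) [c]" by (metis replicate_eqI singletonD subsetD)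
  then have "w = replicate (length ws) c" using \<open>w = concat ws\<close> by (metis concat_replicate_single)
  then show "w \<in> range (\<lambda>m. replicate m c)" by blast
next
  fix w assume "w \<in> range (\<lambda>m. replicate m c)"
  then obtain m where "w = concat (replicate m [c])" by auto
  moreover have "set (replicate m [c]) \<subseteq> {[c]}" by (simp add: set_replicate_conv_if)
  ultimately show "w \<in> kstar {[c]}" using concat_kstar by metis
qed

lemma subst_rep: "subst_word (\<lambda>_. {[0::nat],[1]}) (replicate n (0::nat)) = {w. length w = n \<and> set w \<subseteq> {0,1}}"
proof (induction n)
  case 0 then show ?case by auto
next
  case (Suc n)
  show ?case
  proof (rule set_eqI)
    fix w
    show "w \<in> subst_word (\<lambda>_. {[0::nat],[1]}) (replicate (Suc n) (0::nat)) \<longleftrightarrow> w \<in> {w. length w = Suc n \<and> set w \<subseteq> {0,1}}"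
    proof -
      have e: "subst_word (\<lambda>_. {[0::nat],[1]}) (replicate (Suc n) (0::nat)) = conc {[0::nat],[1]} {w. length w = n \<and> set w \<subseteq> {0,1}}"
        using Suc.IH by simp
      have c: "a # l \<in> conc {[0::nat],[1]} S \<longleftrightarrow> (a = 0 \<or> a = 1) \<and> l \<in> S" for a l S
      proof
        assume "a # l \<in> conc {[0::nat],[1]} S" then show "(a = 0 \<or> a = 1) \<and> l \<in> S"
          unfolding conc_def by auto
      next
        assume h: "(a = 0 \<or> a = 1) \<and> l \<in> S"
        have "a # l = [a] @ l" by simp
        with h show "a # l \<in> conc {[0::nat],[1]} S" unfolding conc_def by blast
      qed
      have n: "[] \<notin> conc {[0::nat],[1]} S" for S unfolding conc_def by auto
      show ?thesis
      proof (cases w)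
        case Nil
        have "w \<notin> conc {[0::nat],[1]} {w. length w = n \<and> set w \<subseteq> {0,1}}" unfolding Nil by (rule n)
        then show ?thesis unfolding Nil e by simp
      next
        case (Cons a l)
        have "w \<in> conc {[0::nat],[1]} {w. length w = n \<and> set w \<subseteq> {0,1}} \<longleftrightarrow> (a = 0 \<or> a = 1) \<and> l \<in> {w. length w = n \<and> set w \<subseteq> {0,1}}"
          unfolding Cons by (rule c)
        then show ?thesis unfolding Cons e by auto
      qed
    qed
  qed
qed

lemma AA_eq: "{w. length w = N \<and> set w \<subseteq> {0,1}} \<inter> (range (\<lambda>m. replicate m (0::nat)) \<union> range (\<lambda>m. replicate m 1)) = AA N"
  unfolding AA_def by auto

lemma part1:
  "\<exists>(Sig::nat set) RR R. alphabet Sig \<and> rational_set Sig RR \<and> regular Sig R \<and>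
            \<not> rational_set Sig (pint RR R)"
proof (intro exI conjI)
  let ?phi = "\<lambda>_::nat. {[0::nat],[1]}"
  let ?K = "conc {[0::nat]} (kstar {[0]})"
  let ?R = "kstar {[0::nat]} \<union> kstar {[1]}"
  show "alphabet {0::nat, 1}" by (simp add: alphabet_def)
  have "rational_by {0::nat, 1} {0} ?K ?phi (subst_word ?phi ` ?K)"
    unfolding rational_by_def
  proof (intro conjI)
    show "alphabet {0::nat}" by (simp add: alphabet_def)
    show "regular {0::nat} ?K" by (intro reg_conc reg_star reg_sym) simp_all
    show "[] \<notin> ?K" by (simp add: conc_def)
    have "{[0::nat],[1]} = {[0]} \<union> {[1]}" by auto
    then have "regular {0::nat, 1} {[0::nat],[1]}" by (metis reg_sym reg_union insertI1 insertI2 singletonI)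
    then show "\<forall>d\<in>{0::nat}. regular {0, 1} (?phi d)" by simp
  qed simp
  then show "rational_set {0::nat, 1} (subst_word ?phi ` ?K)" unfolding rational_set_def by blast
  show "regular {0::nat, 1} ?R" by (intro reg_union reg_star reg_sym) simp_all
  show "\<not> rational_set {0::nat, 1} (pint (subst_word ?phi ` ?K) ?R)"
  proof
    assume "rational_set {0::nat, 1} (pint (subst_word ?phi ` ?K) ?R)"
    then obtain Delta :: "nat set" and K phi where rb: "rational_by {0::nat, 1} Delta K phi (pint (subst_word ?phi ` ?K) ?R)"
      unfolding rational_set_def by blast
    have "AA (Suc n) \<in> phi ` Delta" for n
    proof -
      have "replicate (Suc n) (0::nat) \<in> ?K"
        unfolding conc_def kstar_single by auto
      moreover have "subst_word ?phi (replicate (Suc n) 0) \<inter> ?R = AA (Suc n)"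
      proof -
        have r0: "replicate (Suc n) (0::nat) \<in> range (\<lambda>m. replicate m 0)" by blast
        have r1: "replicate (Suc n) (1::nat) \<in> range (\<lambda>m. replicate m 1)" by blast
        show ?thesis unfolding subst_rep kstar_single by (rule AA_eq)
      qed
      ultimately have "AA (Suc n) \<in> pint (subst_word ?phi ` ?K) ?R" unfolding pint_def by blast
      then obtain w where w: "w \<in> K" "subst_word phi w = AA (Suc n)" using rb unfolding rational_by_def by auto
      have "set w \<subseteq> Delta" using w(1) regular_lists[of Delta K] rb
        unfolding rational_by_def by (auto simp: in_lists_conv_set)
      with AA_factor[OF w(2)] show ?thesis by auto
    qed
    then have "range (\<lambda>n. AA (Suc n)) \<subseteq> phi ` Delta" by auto
    moreover have "finite (phi ` Delta)" using rb unfolding rational_by_def alphabet_def by simp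
    ultimately have "finite (range (\<lambda>n. AA (Suc n)))" by (rule finite_subset)
    then have "finite (UNIV :: nat set)" using AA_inj finite_imageD by blast
    then show False by simp
  qed
qed



theorem proposition8:
  shows "(\<exists>(Sig::nat set) RR R. alphabet Sig \<and> rational_set Sig RR \<and> regular Sig R \<and>
            \<not> rational_set Sig (pint RR R))
       \<and> (\<forall>(Sig::'a set) RR R. alphabet Sig \<longrightarrow> rational_set Sig RR \<longrightarrow> finite RR \<longrightarrow>
            regular Sig R \<longrightarrow> rational_set Sig (pint RR R) \<and> finite (pint RR R))
       \<and> (\<exists>(Sig::nat set) (Delta::nat set) phi K R.
            alphabet Sig \<and> rational_by Sig Delta K phi (subst_word phi ` K) \<and>
            finite (subst_word phi ` K) \<and> regular Sig R \<and>
            \<not> (\<exists>K'. rational_by Sig Delta K' phi (pint (subst_word phi ` K) R)))"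
  using part1 part2 part3 by blast

end
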